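(* Let $G$ be a connected (finite, simple) graph, $\mathcal{F}$ a maximum induced forest of $G$, $S=V(G)\setminus V(\mathcal{F})$, $H$ the contracted graph, and $B$ a skeleton of $H$ with the maximum possible number of 2-edges among all skeletons (all as defined in the context). Then every vertex of $S$ is incident in $B$ to at least one 2-edge.
   Context: A maximum induced forest of $G$ is an induced forest of $G$ with the maximum number of vertices. Let $\mathcal{T}$ be the set of connected components (trees) of $\mathcal{F}$ and $S=V(G)\setminus V(\mathcal{F})$. The graph $H$ has vertex set $\{x_T : T\in\mathcal{T}\}\cup S$ (the $x_T$ are called tree vertices, the vertices of $S$ non-tree vertices) and edge set consisting of all edges of $G[S]$ together with all pairs $ux_T$ with $u\in S$, $T\in\mathcal{T}$ such that $u$ has at least one neighbor in $V(T)$ in $G$. An edge $ux_T$ of $H$ is a 2-edge if $u$ has at least two neighbors in $V(T)$ in $G$; all other edges of $H$ (including all edges with both endpoints in $S$) are 1-edges. A skeleton is a spanning tree of $H$ rooted at some tree vertex, with all edges directed towards the root (an in-arborescence). *)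

theory Defs
  imports Main
begin

definition simple_graph :: "'a set \<Rightarrow> 'a set set \<Rightarrow> bool" where
  "simple_graph V E \<longleftrightarrow> finite V \<and>
     (\<forall>e\<in>E. \<exists>u v. e = {u, v} \<and> u \<noteq> v \<and> u \<in> V \<and> v \<in> V)"

definition adj_in :: "'a set set \<Rightarrow> 'a set \<Rightarrow> ('a \<times> 'a) set" where
  "adj_in E X = {(u, v). u \<in> X \<and> v \<in> X \<and> {u, v} \<in> E}"

definition connected_graph :: "'a set \<Rightarrow> 'a set set \<Rightarrow> bool" where
  "connected_graph V E \<longleftrightarrow> V \<noteq> {} \<and> (\<forall>u\<in>V. \<forall>v\<in>V. (u, v) \<in> (adj_in E V)\<^sup>*)"

definition is_cycle_in :: "'a set set \<Rightarrow> 'a set \<Rightarrow> 'a list \<Rightarrow> bool" where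
  "is_cycle_in E X cs \<longleftrightarrow> length cs \<ge> 3 \<and> distinct cs \<and> set cs \<subseteq> X \<and>
     (\<forall>i < length cs - 1. {cs ! i, cs ! Suc i} \<in> E) \<and> {last cs, hd cs} \<in> E"

definition induced_forest :: "'a set \<Rightarrow> 'a set set \<Rightarrow> 'a set \<Rightarrow> bool" where
  "induced_forest V E X \<longleftrightarrow> X \<subseteq> V \<and> (\<nexists>cs. is_cycle_in E X cs)"

definition max_induced_forest :: "'a set \<Rightarrow> 'a set set \<Rightarrow> 'a set \<Rightarrow> bool" where
  "max_induced_forest V E X \<longleftrightarrow> induced_forest V E X \<and>
     (\<forall>Y. induced_forest V E Y \<longrightarrow> card Y \<le> card X)"

definition components :: "'a set set \<Rightarrow> 'a set \<Rightarrow> 'a set set" where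
  "components E X = {{v \<in> X. (u, v) \<in> (adj_in E X)\<^sup>*} | u. u \<in> X}"

text \<open>Vertices of the contracted graph H: tree vertices x_T (represented by the
  vertex set of T) and non-tree vertices (vertices of S).\<close>
datatype 'a hvert = TreeV "'a set" | NonTree 'a

definition H_verts :: "'a set \<Rightarrow> 'a set set \<Rightarrow> 'a set \<Rightarrow> 'a hvert set" where
  "H_verts V E F = TreeV ` components E F \<union> NonTree ` (V - F)"

definition H_edges :: "'a set \<Rightarrow> 'a set set \<Rightarrow> 'a set \<Rightarrow> 'a hvert set set" where
  "H_edges V E F =
     {{NonTree u, NonTree v} | u v. u \<in> V - F \<and> v \<in> V - F \<and> {u, v} \<in> E} \<union>
     {{NonTree u, TreeV T} | u T. u \<in> V - F \<and> T \<in> components E F \<and>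
                                  (\<exists>w\<in>T. {u, w} \<in> E)}"

definition two_edge :: "'a set \<Rightarrow> 'a set set \<Rightarrow> 'a set \<Rightarrow> 'a hvert set \<Rightarrow> bool" where
  "two_edge V E F e \<longleftrightarrow> e \<in> H_edges V E F \<and>
     (\<exists>u T. e = {NonTree u, TreeV T} \<and> card {w \<in> T. {u, w} \<in> E} \<ge> 2)"

text \<open>A skeleton: spanning tree of H rooted at a tree vertex r, given as the set B
  of arcs directed towards the root (an in-arborescence).\<close>
definition skeleton :: "'a set \<Rightarrow> 'a set set \<Rightarrow> 'a set \<Rightarrow> 'a hvert \<Rightarrow>
                        ('a hvert \<times> 'a hvert) set \<Rightarrow> bool" where
  "skeleton V E F r B \<longleftrightarrow>
     r \<in> TreeV ` components E F \<and>
     (\<forall>(a, b) \<in> B. a \<in> H_verts V E F \<and> b \<in> H_verts V E F \<and> {a, b} \<in> H_edges V E F) \<and>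
     (\<forall>b. (r, b) \<notin> B) \<and>
     (\<forall>a \<in> H_verts V E F. a \<noteq> r \<longrightarrow> (\<exists>!b. (a, b) \<in> B)) \<and>
     (\<forall>a \<in> H_verts V E F. (a, r) \<in> B\<^sup>*)"

definition num_two_edges :: "'a set \<Rightarrow> 'a set set \<Rightarrow> 'a set \<Rightarrow>
                             ('a hvert \<times> 'a hvert) set \<Rightarrow> nat" where
  "num_two_edges V E F B = card {(a, b) \<in> B. two_edge V E F {a, b}}"

end

theory Submission
  imports Defs
begin

locale arbo =
  fixes W :: "'v set" and r :: 'v and B :: "('v \<times> 'v) set"
  assumes sub: "B \<subseteq> W \<times> W"
    and root: "\<And>b. (r, b) \<notin> B"
    and uniq: "\<And>a. a \<in> W \<Longrightarrow> a \<noteq> r \<Longrightarrow> \<exists>!b. (a, b) \<in> B"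
    and reach: "\<And>a. a \<in> W \<Longrightarrow> (a, r) \<in> B\<^sup>*"

definition UE :: "('v \<times> 'v) set \<Rightarrow> 'v set set" where
  "UE B = (\<lambda>(a, b). {a, b}) ` B"

context arbo begin

lemma func: "(a, b) \<in> B \<Longrightarrow> (a, b') \<in> B \<Longrightarrow> b = b'"
proof -
  assume h: "(a, b) \<in> B" "(a, b') \<in> B"
  have "a \<in> W" using sub h by auto
  moreover have "a \<noteq> r" using root h by auto
  ultimately show ?thesis using uniq h by blast
qed

lemma acyc: "(a, a) \<in> B\<^sup>+ \<Longrightarrow> False"
proof -
  assume cyc: "(a, a) \<in> B\<^sup>+"
  have aW: "a \<in> W" using cyc sub by (auto dest: tranclD)
  have "(z, a) \<in> B\<^sup>+" if "(a, z) \<in> B\<^sup>*" for z using that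
  proof (induction rule: rtrancl_induct)
    case base show ?case by (rule cyc)
  next
    case (step y z)
    from step.IH obtain w where w: "(y, w) \<in> B" "(w, a) \<in> B\<^sup>*" by (auto dest: tranclD)
    with step.hyps(2) have "w = z" using func by blast
    then have "(z, a) \<in> B\<^sup>*" using w by simp
    then show ?case using cyc by (metis rtrancl_eq_or_trancl)
  qed
  from this[OF reach[OF aW]] obtain w where "(r, w) \<in> B" by (auto dest: tranclD)
  with root show False by blast
qed

lemma chain:
  assumes hp: "(x, p) \<in> B\<^sup>*" and hq: "(x, q) \<in> B\<^sup>*"
  shows "(p, q) \<in> B\<^sup>* \<or> (q, p) \<in> B\<^sup>*"
  using hq
proof (induction rule: rtrancl_induct)
  case base then show ?case using hp by simp
next
  case (step y q)
  from step.IH show ?case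
  proof
    assume "(p, y) \<in> B\<^sup>*" then show ?thesis using step.hyps(2) by auto
  next
    assume yp: "(y, p) \<in> B\<^sup>*"
    show ?thesis
    proof (cases "y = p")
      case True then show ?thesis using step.hyps(2) by auto
    next
      case False
      then have "(y, p) \<in> B\<^sup>+" using yp by (metis rtrancl_eq_or_trancl)
      then obtain w where w: "(y, w) \<in> B" "(w, p) \<in> B\<^sup>*" by (auto dest: tranclD)
      then have "w = q" using func step.hyps(2) by blast
      then show ?thesis using w by auto
    qed
  qed
qed

lemma inj2: "(a, b) \<in> B \<Longrightarrow> (a', b') \<in> B \<Longrightarrow> {a, b} = {a', b'} \<Longrightarrow> a = a' \<and> b = b'"
proof -
  assume h: "(a, b) \<in> B" "(a', b') \<in> B" "{a, b} = {a', b'}"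
  show ?thesis
  proof (rule ccontr)
    assume "\<not> (a = a' \<and> b = b')"
    then have "a = b' \<and> b = a'" using h(3) by (auto simp: doubleton_eq_iff)
    then have "(a, a) \<in> B\<^sup>+" using h by auto
    then show False by (rule acyc)
  qed
qed

lemma count: "card {(a, b) \<in> B. P {a, b}} = card {e \<in> UE B. P e}"
proof -
  have "{e \<in> UE B. P e} = (\<lambda>(a, b). {a, b}) ` {(a, b) \<in> B. P {a, b}}"
    by (auto simp: UE_def)
  moreover have "inj_on (\<lambda>(a, b). {a, b}) {(a, b) \<in> B. P {a, b}}"
    using inj2 by (auto simp: inj_on_def)
  ultimately show ?thesis by (simp add: card_image)
qed

lemma exch1:
  assumes uW: "u \<in> W" and xW: "x \<in> W" and ur: "u \<noteq> r" and ub: "(u, b) \<in> B"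
    and xu: "(x, u) \<notin> B\<^sup>*"
  shows "arbo W r (insert (u, x) (B - {(u, b)}))"
    and "UE (insert (u, x) (B - {(u, b)})) = insert {u, x} (UE B - {{u, b}})"
proof -
  let ?B0 = "B - {(u, b)}"
  let ?B' = "insert (u, x) ?B0"
  have A: "(a, r) \<in> ?B0\<^sup>*" if "(a, r) \<in> B\<^sup>*" "(a, u) \<notin> B\<^sup>*" for a
    using that
  proof (induction rule: converse_rtrancl_induct)
    case base then show ?case by simp
  next
    case (step a a')
    have "a \<noteq> u" using step.prems by auto
    moreover have "(a', u) \<notin> B\<^sup>*" using step.prems step.hyps(1)
      by (meson converse_rtrancl_into_rtrancl)
    ultimately show ?case using step
      by (meson DiffI converse_rtrancl_into_rtrancl prod.inject singletonD)
  qed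
  have Bu: "(a, u) \<in> ?B0\<^sup>*" if "(a, u) \<in> B\<^sup>*" for a
    using that
  proof (induction rule: converse_rtrancl_induct)
    case base then show ?case by simp
  next
    case (step a a')
    show ?case
    proof (cases "a = u")
      case True then show ?thesis by simp
    next
      case False
      then have "(a, a') \<in> ?B0" using step.hyps by auto
      then show ?thesis using step.IH by (meson converse_rtrancl_into_rtrancl)
    qed
  qed
  have mono: "?B0\<^sup>* \<subseteq> ?B'\<^sup>*" by (rule rtrancl_mono) auto
  show "arbo W r ?B'"
  proof
    show "?B' \<subseteq> W \<times> W" using sub uW xW by auto
    show "(r, c) \<notin> ?B'" for c using root ur by auto
    show "\<exists>!c. (a, c) \<in> ?B'" if "a \<in> W" "a \<noteq> r" for a
    proof (cases "a = u")
      case True then show ?thesis using func[OF ub] by auto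
    next
      case False
      then show ?thesis using uniq[OF that] by auto
    qed
    show "(a, r) \<in> ?B'\<^sup>*" if aW: "a \<in> W" for a
    proof (cases "(a, u) \<in> B\<^sup>*")
      case True
      have "(a, u) \<in> ?B'\<^sup>*" using Bu[OF True] mono by auto
      moreover have "(u, x) \<in> ?B'" by simp
      moreover have "(x, r) \<in> ?B'\<^sup>*" using A[OF reach[OF xW] xu] mono by auto
      ultimately show ?thesis by (meson rtrancl_into_rtrancl rtrancl_trans)
    next
      case False
      then show ?thesis using A[OF reach[OF aW]] mono by auto
    qed
  qed
  show "UE ?B' = insert {u, x} (UE B - {{u, b}})"
  proof
    show "UE ?B' \<subseteq> insert {u, x} (UE B - {{u, b}})"
    proof
      fix e assume "e \<in> UE ?B'"
      then obtain a c where e: "e = {a, c}" "(a, c) \<in> ?B'" by (auto simp: UE_def)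
      show "e \<in> insert {u, x} (UE B - {{u, b}})"
      proof (cases "(a, c) = (u, x)")
        case True then show ?thesis using e by simp
      next
        case False
        then have ac: "(a, c) \<in> B" "(a, c) \<noteq> (u, b)" using e by auto
        then have "{a, c} \<noteq> {u, b}" using inj2[OF ac(1) ub] by auto
        then show ?thesis using e ac by (auto simp: UE_def)
      qed
    qed
    show "insert {u, x} (UE B - {{u, b}}) \<subseteq> UE ?B'"
      by (auto simp: UE_def)
  qed
qed

lemma exch2:
  assumes uW: "u \<in> W" and xW: "x \<in> W" and xc: "(x, c) \<in> B\<^sup>*" and cu: "(c, u) \<in> B"
  defines "Q \<equiv> {p. (x, p) \<in> B\<^sup>* \<and> (p, c) \<in> B\<^sup>*}"
  defines "B' \<equiv> (B - {(p, q). p \<in> Q}) \<union> {(q, p). (p, q) \<in> B \<and> p \<in> Q \<and> q \<in> Q} \<union> {(x, u)}"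
  shows "arbo W r B'" and "UE B' = insert {x, u} (UE B - {{c, u}})"
proof -
  have xQ: "x \<in> Q" using xc by (simp add: Q_def)
  have rQ: "r \<notin> Q"
  proof
    assume "r \<in> Q"
    then have "(r, c) \<in> B\<^sup>*" by (simp add: Q_def)
    then have "r = c" using root by (metis converse_rtranclE)
    then show False using cu root by simp
  qed
  have uQ: "u \<notin> Q"
  proof
    assume "u \<in> Q"
    then have "(u, c) \<in> B\<^sup>*" by (simp add: Q_def)
    then have "(c, c) \<in> B\<^sup>+" using cu by auto
    then show False by (rule acyc)
  qed
  have cQ: "c \<in> Q" using xc by (simp add: Q_def)
  have succQ: "b \<in> Q" if "a \<in> Q" "(a, b) \<in> B" "a \<noteq> c" for a b
  proof -
    have "(a, c) \<in> B\<^sup>+" using that by (simp add: Q_def rtrancl_eq_or_trancl)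
    then obtain w where w: "(a, w) \<in> B" "(w, c) \<in> B\<^sup>*" by (auto dest: tranclD)
    then have "w = b" using func that(2) by blast
    then show ?thesis using w that by (auto simp: Q_def)
  qed
  have QW: "Q \<subseteq> W"
  proof
    fix p assume "p \<in> Q"
    then have "(x, p) \<in> B\<^sup>*" by (simp add: Q_def)
    then show "p \<in> W" using xW sub by (induction rule: rtrancl_induct) auto
  qed
  have sub': "B' \<subseteq> W \<times> W" using sub uW xW by (auto simp: B'_def)
  have A: "(a, r) \<in> B'\<^sup>* \<or> (\<exists>p\<in>Q. (a, p) \<in> B'\<^sup>* \<and> (a, p) \<in> B\<^sup>*)" if "(a, r) \<in> B\<^sup>*" for a
    using that
  proof (induction rule: converse_rtrancl_induct)
    case base then show ?case by simp
  next
    case (step a a')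
    show ?case
    proof (cases "a \<in> Q")
      case True then show ?thesis by blast
    next
      case False
      then have aa: "(a, a') \<in> B'" using step.hyps(1) by (auto simp: B'_def)
      from step.IH show ?thesis
      proof
        assume "(a', r) \<in> B'\<^sup>*" then show ?thesis using aa
          by (meson converse_rtrancl_into_rtrancl)
      next
        assume "\<exists>p\<in>Q. (a', p) \<in> B'\<^sup>* \<and> (a', p) \<in> B\<^sup>*"
        then show ?thesis using aa step.hyps(1)
          by (meson converse_rtrancl_into_rtrancl)
      qed
    qed
  qed
  have Bq: "(p, x) \<in> B'\<^sup>*" if "p \<in> Q" for p
  proof -
    have "(x, p) \<in> B\<^sup>*" "(p, c) \<in> B\<^sup>*" using that by (auto simp: Q_def)
    then show ?thesis
    proof (induction rule: rtrancl_induct)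
      case base then show ?case by simp
    next
      case (step q p)
      have "(q, c) \<in> B\<^sup>*" using step.hyps(2) step.prems by auto
      then have qQ: "q \<in> Q" using step.hyps(1) by (simp add: Q_def)
      have pQ: "p \<in> Q" using step.hyps step.prems by (auto simp: Q_def)
      have "(p, q) \<in> B'" using qQ pQ step.hyps(2) by (auto simp: B'_def)
      then show ?case using step.IH[OF \<open>(q, c) \<in> B\<^sup>*\<close>]
        by (meson converse_rtrancl_into_rtrancl)
    qed
  qed
  have ur: "(u, r) \<in> B'\<^sup>*"
  proof -
    have "\<not> (\<exists>p\<in>Q. (u, p) \<in> B\<^sup>*)"
    proof
      assume "\<exists>p\<in>Q. (u, p) \<in> B\<^sup>*"
      then obtain p where "p \<in> Q" "(u, p) \<in> B\<^sup>*" by blast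
      then have "(u, c) \<in> B\<^sup>*" by (auto simp: Q_def)
      then have "(c, c) \<in> B\<^sup>+" using cu by auto
      then show False by (rule acyc)
    qed
    then show ?thesis using A[OF reach[OF uW]] by blast
  qed
  show "arbo W r B'"
  proof
    show "B' \<subseteq> W \<times> W" by (rule sub')
    show "(r, b) \<notin> B'" for b using root rQ xQ by (auto simp: B'_def)
    show "\<exists>!b. (a, b) \<in> B'" if aW: "a \<in> W" and ar: "a \<noteq> r" for a
    proof (cases "a \<in> Q")
      case False
      then show ?thesis using uniq[OF aW ar] xQ by (auto simp: B'_def)
    next
      case aQ: True
      show ?thesis
      proof (cases "a = x")
        case True
        have "\<not> ((p, x) \<in> B \<and> p \<in> Q)" for p
        proof
          assume "(p, x) \<in> B \<and> p \<in> Q"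
          then have "(x, x) \<in> B\<^sup>+" by (auto simp: Q_def)
          then show False by (rule acyc)
        qed
        then show ?thesis using True aQ by (auto simp: B'_def)
      next
        case False
        have "(x, a) \<in> B\<^sup>*" using aQ by (simp add: Q_def)
        then have "(x, a) \<in> B\<^sup>+" using False by (simp add: rtrancl_eq_or_trancl)
        then obtain p where p: "(x, p) \<in> B\<^sup>*" "(p, a) \<in> B" by (auto dest: tranclD2)
        have pQ: "p \<in> Q" using p aQ by (auto simp: Q_def)
        have pu: "p' = p" if "(p', a) \<in> B" "p' \<in> Q" for p'
        proof (rule ccontr)
          assume ne: "p' \<noteq> p"
          have xp': "(x, p') \<in> B\<^sup>*" using that by (simp add: Q_def)
          from chain[OF p(1) xp'] show False
          proof
            assume "(p, p') \<in> B\<^sup>*"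
            then have "(p, p') \<in> B\<^sup>+" using ne by (simp add: rtrancl_eq_or_trancl)
            then obtain w where w: "(p, w) \<in> B" "(w, p') \<in> B\<^sup>*" by (auto dest: tranclD)
            then have "w = a" using func p(2) by blast
            then have "(a, a) \<in> B\<^sup>+" using w that(1) by auto
            then show False by (rule acyc)
          next
            assume "(p', p) \<in> B\<^sup>*"
            then have "(p', p) \<in> B\<^sup>+" using ne by (simp add: rtrancl_eq_or_trancl)
            then obtain w where w: "(p', w) \<in> B" "(w, p) \<in> B\<^sup>*" by (auto dest: tranclD)
            then have "w = a" using func that(1) by blast
            then have "(a, a) \<in> B\<^sup>+" using w p(2) by auto
            then show False by (rule acyc)
          qed
        qed
        have "(a, p) \<in> B'" using pQ aQ p(2) by (auto simp: B'_def)
        moreover have "b = p" if "(a, b) \<in> B'" for b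
          using that aQ False pu by (auto simp: B'_def)
        ultimately show ?thesis by blast
      qed
    qed
    show "(a, r) \<in> B'\<^sup>*" if aW: "a \<in> W" for a
      using A[OF reach[OF aW]]
    proof
      assume "\<exists>p\<in>Q. (a, p) \<in> B'\<^sup>* \<and> (a, p) \<in> B\<^sup>*"
      then obtain p where "p \<in> Q" "(a, p) \<in> B'\<^sup>*" by blast
      then have "(a, x) \<in> B'\<^sup>*" using Bq by (meson rtrancl_trans)
      moreover have "(x, u) \<in> B'" by (simp add: B'_def)
      ultimately show ?thesis using ur by (meson rtrancl_into_rtrancl rtrancl_trans)
    qed
  qed
  show "UE B' = insert {x, u} (UE B - {{c, u}})"
  proof
    show "UE B' \<subseteq> insert {x, u} (UE B - {{c, u}})"
    proof
      fix e assume "e \<in> UE B'"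
      then obtain a b where e: "e = {a, b}" "(a, b) \<in> B'" by (auto simp: UE_def)
      consider "(a, b) \<in> B" "a \<notin> Q" | "(b, a) \<in> B" "a \<in> Q" "b \<in> Q" | "(a, b) = (x, u)"
        using e(2) by (auto simp: B'_def)
      then show "e \<in> insert {x, u} (UE B - {{c, u}})"
      proof cases
        case 1
        then have "{a, b} \<noteq> {c, u}" using inj2[OF 1(1) cu] cQ by auto
        then show ?thesis using e 1 by (auto simp: UE_def)
      next
        case 2
        then have "{b, a} \<noteq> {c, u}" using inj2[OF 2(1) cu] uQ by auto
        moreover have "{b, a} \<in> UE B" using 2 by (auto simp: UE_def)
        ultimately show ?thesis using e by (auto simp: insert_commute)
      next
        case 3 then show ?thesis using e by simp
      qed
    qed
    show "insert {x, u} (UE B - {{c, u}}) \<subseteq> UE B'"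
    proof
      fix e assume e: "e \<in> insert {x, u} (UE B - {{c, u}})"
      show "e \<in> UE B'"
      proof (cases "e = {x, u}")
        case True then show ?thesis by (auto simp: UE_def B'_def)
      next
        case False
        then obtain a b where ab: "e = {a, b}" "(a, b) \<in> B" "{a, b} \<noteq> {c, u}" using e
          by (auto simp: UE_def)
        show ?thesis
        proof (cases "a \<in> Q")
          case False
          then have "(a, b) \<in> B'" using ab by (auto simp: B'_def)
          then show ?thesis using ab by (force simp: UE_def)
        next
          case True
          have "a \<noteq> c" using ab func cu by blast
          then have "b \<in> Q" using succQ True ab by blast
          then have "(b, a) \<in> B'" using ab True by (auto simp: B'_def)
          then have "{b, a} \<in> UE B'" by (force simp: UE_def)
          then show ?thesis using ab by (simp add: insert_commute)
        qed
      qed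
    qed
  qed
qed

end

lemma skel_iff:
  "skeleton V E F r B \<longleftrightarrow> r \<in> TreeV ` components E F \<and> arbo (H_verts V E F) r B \<and>
     (\<forall>(a, b) \<in> B. {a, b} \<in> H_edges V E F)"
  unfolding skeleton_def arbo_def by fast

lemma cyc_rot1:
  assumes c: "is_cycle_in E X cs"
  shows "is_cycle_in E X (rotate1 cs)"
proof -
  have len: "length cs \<ge> 3" and dis: "distinct cs" and st: "set cs \<subseteq> X"
    and ed: "\<And>i. i < length cs - 1 \<Longrightarrow> {cs ! i, cs ! Suc i} \<in> E"
    and cl: "{last cs, hd cs} \<in> E"
    using c by (auto simp: is_cycle_in_def)
  obtain a xs where cs: "cs = a # xs" using len by (cases cs) auto
  have lx: "length xs \<ge> 2" using len cs by simp
  have "{(xs @ [a]) ! i, (xs @ [a]) ! Suc i} \<in> E" if i: "i < length xs" for i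
  proof (cases "Suc i < length xs")
    case True
    then show ?thesis using ed[of "Suc i"] cs by (simp add: nth_append)
  next
    case False
    then have "Suc i = length xs" using i by simp
    moreover have "last cs = xs ! i" using cs lx \<open>Suc i = length xs\<close>
      by (metis One_nat_def diff_Suc_1 last_ConsR last_conv_nth list.size(3) not_numeral_le_zero)
    ultimately show ?thesis using cl cs i by (simp add: nth_append)
  qed
  moreover have "{a, hd xs} \<in> E" using ed[of 0] cs lx by (cases xs) auto
  ultimately show ?thesis using len dis st cs lx
    by (auto simp: is_cycle_in_def insert_commute hd_append)
qed

lemma cyc_rot: "is_cycle_in E X cs \<Longrightarrow> is_cycle_in E X (rotate n cs)"
  by (induction n) (auto simp: cyc_rot1)

lemma two_nbrs:
  assumes sg: "simple_graph V E" and mf: "max_induced_forest V E F" and uV: "u \<in> V" and uF: "u \<notin> F"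
  shows "\<exists>T\<in>components E F. card {w \<in> T. {u, w} \<in> E} \<ge> 2"
proof -
  have fV: "finite V" using sg by (simp add: simple_graph_def)
  have FV: "F \<subseteq> V" and forest: "\<not> (\<exists>cs. is_cycle_in E F cs)"
    and maxc: "\<And>Y. induced_forest V E Y \<Longrightarrow> card Y \<le> card F"
    using mf by (auto simp: max_induced_forest_def induced_forest_def)
  have fF: "finite F" using fV FV finite_subset by blast
  have "\<not> induced_forest V E (insert u F)"
  proof
    assume "induced_forest V E (insert u F)"
    then have "card (insert u F) \<le> card F" by (rule maxc)
    then show False using fF uF by simp
  qed
  then obtain cs where cs: "is_cycle_in E (insert u F) cs"
    using FV uV by (auto simp: induced_forest_def)
  have "u \<in> set cs"
  proof (rule ccontr)
    assume "u \<notin> set cs"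
    then have "is_cycle_in E F cs" using cs by (auto simp: is_cycle_in_def)
    then show False using forest by blast
  qed
  then obtain i where i: "i < length cs" "cs ! i = u" by (auto simp: in_set_conv_nth)
  define ds where "ds = rotate i cs"
  have dc: "is_cycle_in E (insert u F) ds" unfolding ds_def by (rule cyc_rot[OF cs])
  have len: "length ds \<ge> 3" and dis: "distinct ds" and st: "set ds \<subseteq> insert u F"
    and ed: "\<And>i. i < length ds - 1 \<Longrightarrow> {ds ! i, ds ! Suc i} \<in> E"
    and cl: "{last ds, hd ds} \<in> E"
    using dc by (auto simp: is_cycle_in_def)
  have hd: "hd ds = u" using i unfolding ds_def
    by (metis hd_rotate_conv_nth list.size(3) mod_less not_less_zero)
  have d0: "ds ! 0 = u" using hd len by (metis hd_conv_nth list.size(3) not_numeral_le_zero)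
  have dsF: "ds ! j \<in> F" if "0 < j" "j < length ds" for j
  proof -
    have "ds ! j \<in> insert u F" using st nth_mem[OF that(2)] by blast
    moreover have "ds ! j \<noteq> u" using d0 dis that
      by (metis gr_implies_not0 le_less_trans nth_eq_iff_index_eq zero_le)
    ultimately show ?thesis by auto
  qed
  define T where "T = {v \<in> F. (ds ! 1, v) \<in> (adj_in E F)\<^sup>*}"
  have d1F: "ds ! 1 \<in> F" using dsF len by auto
  have TC: "T \<in> components E F" using d1F unfolding T_def components_def by blast
  have path: "j \<ge> 1 \<longrightarrow> j < length ds \<longrightarrow> ds ! j \<in> T" for j
  proof (induction j)
    case 0 then show ?case by simp
  next
    case (Suc j)
    show ?case
    proof (cases "j = 0")
      case True then show ?thesis using d1F by (simp add: T_def)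
    next
      case False
      show ?thesis
      proof (intro impI)
        assume "Suc j < length ds"
        then have jT: "ds ! j \<in> T" using Suc.IH False by simp
        have "{ds ! j, ds ! Suc j} \<in> E" using ed \<open>Suc j < length ds\<close> by simp
        moreover have "ds ! Suc j \<in> F" using dsF \<open>Suc j < length ds\<close> by simp
        ultimately have "(ds ! j, ds ! Suc j) \<in> adj_in E F" using jT by (auto simp: adj_in_def T_def)
        then show "ds ! Suc j \<in> T" using jT \<open>ds ! Suc j \<in> F\<close> by (auto simp: T_def)
      qed
    qed
  qed
  have ldef: "last ds = ds ! (length ds - 1)" using len by (metis One_nat_def last_conv_nth list.size(3) not_numeral_le_zero)
  have w2T: "last ds \<in> T" using path[of "length ds - 1"] len ldef by simp
  have w1T: "ds ! 1 \<in> T" using path[of 1] len by simp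
  have ne: "ds ! 1 \<noteq> last ds" using ldef dis len by (simp add: nth_eq_iff_index_eq)
  have e1: "{u, ds ! 1} \<in> E" using ed[of 0] len d0 by simp
  have e2: "{u, last ds} \<in> E" using cl hd by (simp add: insert_commute)
  have sub: "{ds ! 1, last ds} \<subseteq> {w \<in> T. {u, w} \<in> E}" using w1T w2T e1 e2 by auto
  have fin: "finite {w \<in> T. {u, w} \<in> E}" using fF by (auto simp: T_def)
  have "card {ds ! 1, last ds} \<le> card {w \<in> T. {u, w} \<in> E}" by (rule card_mono[OF fin sub])
  then have "2 \<le> card {w \<in> T. {u, w} \<in> E}" using ne by simp
  then show ?thesis using TC by blast
qed

theorem lemma4:
  fixes V :: "'a set" and E :: "'a set set" and F :: "'a set"
    and r :: "'a hvert" and B :: "('a hvert \<times> 'a hvert) set"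
  assumes "simple_graph V E"
    and "connected_graph V E"
    and "max_induced_forest V E F"
    and "skeleton V E F r B"
    and "\<forall>r' B'. skeleton V E F r' B' \<longrightarrow> num_two_edges V E F B' \<le> num_two_edges V E F B"
  shows "\<forall>u \<in> V - F. \<exists>(a, b) \<in> B. (a = NonTree u \<or> b = NonTree u) \<and> two_edge V E F {a, b}"
proof (rule ccontr)
  assume "\<not> ?thesis"
  then obtain u where u: "u \<in> V" "u \<notin> F"
    and no: "\<And>a b. (a, b) \<in> B \<Longrightarrow> a = NonTree u \<or> b = NonTree u \<Longrightarrow> \<not> two_edge V E F {a, b}"
    by blast
  obtain T where T: "T \<in> components E F" "card {w \<in> T. {u, w} \<in> E} \<ge> 2"
    using two_nbrs[OF assms(1) assms(3) u] by blast
  define W where "W = H_verts V E F"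
  define x where "x = TreeV T"
  define y where "y = NonTree u"
  define P where "P = two_edge V E F"
  have rW: "r \<in> TreeV ` components E F" and arb: "arbo W r B"
    and edB: "\<forall>(a, b) \<in> B. {a, b} \<in> H_edges V E F"
    using assms(4) unfolding skel_iff W_def by auto
  interpret arbo W r B by (rule arb)
  have "{w \<in> T. {u, w} \<in> E} \<noteq> {}" using T(2) by (metis card.empty not_numeral_le_zero)
  then have "\<exists>w\<in>T. {u, w} \<in> E" by auto
  then have yxH: "{y, x} \<in> H_edges V E F" using u T(1) unfolding H_edges_def x_def y_def by blast
  have Pyx: "P {y, x}" using yxH T(2) unfolding P_def two_edge_def x_def y_def by blast
  have nyx: "(y, x) \<notin> B" using no Pyx unfolding P_def y_def by blast
  have nxy: "(x, y) \<notin> B" using no Pyx unfolding P_def y_def by (metis insert_commute)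
  have yxUE: "{y, x} \<notin> UE B" using nyx nxy by (auto simp: UE_def doubleton_eq_iff)
  have fC: "finite (components E F)"
  proof -
    have "finite F" using assms(1,3) finite_subset
      by (auto simp: simple_graph_def max_induced_forest_def induced_forest_def)
    moreover have "components E F \<subseteq> Pow F" by (auto simp: components_def)
    ultimately show ?thesis by (meson finite_Pow_iff finite_subset)
  qed
  have fW: "finite W" using fC assms(1) by (auto simp: W_def H_verts_def simple_graph_def)
  have fB: "finite B" using sub fW by (meson finite_SigmaI finite_subset)
  have xW: "x \<in> W" using T(1) by (simp add: W_def H_verts_def x_def)
  have yW: "y \<in> W" using u by (simp add: W_def H_verts_def y_def)
  have yr: "y \<noteq> r" using rW by (auto simp: y_def)
  have xy: "x \<noteq> y" by (simp add: x_def y_def)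
  have final: False if a': "arbo W r B'" and ue: "UE B' = insert {y, x} (UE B - {e0})"
    and ne0: "\<not> P e0" for B' e0
  proof -
    interpret B': arbo W r B' by (rule a')
    have "\<forall>(a, b) \<in> B'. {a, b} \<in> H_edges V E F"
    proof (intro ballI, clarify)
      fix a b assume "(a, b) \<in> B'"
      then have "{a, b} \<in> UE B'" by (force simp: UE_def)
      then have "{a, b} = {y, x} \<or> {a, b} \<in> UE B" using ue by auto
      then show "{a, b} \<in> H_edges V E F" using yxH edB by (auto simp: UE_def)
    qed
    then have sk: "skeleton V E F r B'" unfolding skel_iff using rW a' by (simp add: W_def)
    have "num_two_edges V E F B' \<le> num_two_edges V E F B" using assms(5) sk by blast
    moreover have "num_two_edges V E F B' = card {e \<in> UE B'. P e}"
      unfolding num_two_edges_def P_def by (rule B'.count)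
    moreover have "num_two_edges V E F B = card {e \<in> UE B. P e}"
      unfolding num_two_edges_def P_def by (rule count)
    moreover have "{e \<in> UE B'. P e} = insert {y, x} {e \<in> UE B. P e}"
      using ue ne0 Pyx by auto
    moreover have "finite {e \<in> UE B. P e}" using fB by (simp add: UE_def)
    ultimately show False using yxUE by simp
  qed
  show False
  proof (cases "(x, y) \<in> B\<^sup>*")
    case False
    obtain b where yb: "(y, b) \<in> B" using uniq[OF yW yr] by blast
    have "\<not> P {y, b}" using no[OF yb] by (simp add: P_def y_def)
    then show False using final[OF exch1(1)[OF yW xW yr yb False] exch1(2)[OF yW xW yr yb False]]
      by blast
  next
    case True
    then have "(x, y) \<in> B\<^sup>+" using xy by (simp add: rtrancl_eq_or_trancl)
    then obtain c where c: "(x, c) \<in> B\<^sup>*" "(c, y) \<in> B" by (auto dest: tranclD2)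
    have "\<not> P {c, y}" using no[OF c(2)] by (simp add: P_def y_def)
    have ue: "UE ((B - {(p, q). p \<in> {p. (x, p) \<in> B\<^sup>* \<and> (p, c) \<in> B\<^sup>*}}) \<union>
       {(q, p). (p, q) \<in> B \<and> p \<in> {p. (x, p) \<in> B\<^sup>* \<and> (p, c) \<in> B\<^sup>*} \<and>
          q \<in> {p. (x, p) \<in> B\<^sup>* \<and> (p, c) \<in> B\<^sup>*}} \<union> {(x, y)})
      = insert {y, x} (UE B - {{c, y}})"
      using exch2(2)[OF yW xW c] by (simp add: insert_commute)
    show False by (rule final[OF exch2(1)[OF yW xW c] ue]) fact
  qed
qed

end
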